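(* Let $V, W$ be real Banach spaces and let $h$ be a $C^1$ diffeomorphism of $V$ with $h^k = h \circ \cdots \circ h = \mathrm{id}_V$ ($k$-fold) for some integer $k \ge 1$. Let $f: [0,\infty) \times V \to V$ and $\Delta t > 0$ satisfy $$f(t, h^n(u)) = Dh^n(u)\, f(t + n\Delta t, u) \quad \text{for all } 1 \le n \le k,\ u \in V,\ t \ge 0.$$ Suppose there is $\Theta \in GL(V,W)$ and $\lambda < 0$ with $M^\Theta(f_t) \le \lambda$ for all $t \ge 0$. Then for every solution $u$ of $\dot u = f(t,u)$, the limit $p(t) = \lim_{n\to\infty} u(t + nk\Delta t)$ exists for every $t \ge 0$. The resulting function $p$ is $k\Delta t$-periodic, and $\|u(t) - p(t)\| \to 0$ exponentially as $t \to \infty$.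
   Context: For a real Banach space $X$, the right semi-inner product is $(a,b)_+ := \|a\| \lim_{s \to 0^+} \frac{\|a + sb\| - \|a\|}{s}$. For $\Theta \in GL(V,W)$ (a bijective bounded linear operator) and $g: V \to V$, $M^\Theta(g) := \sup_{u \ne v \in V} \frac{(\Theta(u-v), \Theta(g(u) - g(v)))_+}{\|\Theta(u-v)\|_W^2}$. We write $f_t = f(t,\cdot)$, and $D$ denotes the Fréchet derivative. Solutions are continuously differentiable curves $[0,\infty) \to V$ satisfying the equation for all $t \ge 0$. *)

theory Defs
  imports "HOL-Analysis.Analysis"
begin

definition C1_map :: "('a::real_normed_vector \<Rightarrow> 'b::real_normed_vector) \<Rightarrow> bool" where
  "C1_map g \<longleftrightarrow> (\<exists>g'. (\<forall>x. (g has_derivative blinfun_apply (g' x)) (at x)) \<and> continuous_on UNIV g')"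

definition C1_diffeo :: "('a::real_normed_vector \<Rightarrow> 'a) \<Rightarrow> bool" where
  "C1_diffeo g \<longleftrightarrow> bij g \<and> C1_map g \<and> C1_map (inv g)"

definition sip_plus :: "'a::real_normed_vector \<Rightarrow> 'a \<Rightarrow> real" where
  "sip_plus a b = norm a * Lim (at_right 0) (\<lambda>s. (norm (a + s *\<^sub>R b) - norm a) / s)"

definition GL :: "('a::real_normed_vector \<Rightarrow> 'b::real_normed_vector) \<Rightarrow> bool" where
  "GL \<Theta> \<longleftrightarrow> bounded_linear \<Theta> \<and> bij \<Theta>"

definition M_Theta :: "('a::real_normed_vector \<Rightarrow> 'b::real_normed_vector) \<Rightarrow> ('a \<Rightarrow> 'a) \<Rightarrow> ereal" where
  "M_Theta \<Theta> g = (SUP uv\<in>{(u,v). u \<noteq> v}.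
      ereal (sip_plus (\<Theta> (fst uv - snd uv)) (\<Theta> (g (fst uv) - g (snd uv)))
             / (norm (\<Theta> (fst uv - snd uv)))\<^sup>2))"

definition is_solution :: "(real \<Rightarrow> 'a::real_normed_vector \<Rightarrow> 'a) \<Rightarrow> (real \<Rightarrow> 'a) \<Rightarrow> bool" where
  "is_solution f u \<longleftrightarrow>
     (\<forall>t\<ge>0. (u has_vector_derivative f t (u t)) (at t within {0..}))
     \<and> continuous_on {0..} (\<lambda>t. f t (u t))"

end

theory Submission
  imports Defs
begin


lemma approx_imp_preimage:
  fixes T :: "'a::banach \<Rightarrow> 'b::real_normed_vector"
  assumes bl: "bounded_linear T" and M: "M > 0"
    and approx: "\<And>y. \<exists>x. norm x \<le> M * norm y \<and> norm (y - T x) \<le> norm y / 2"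
  shows "\<exists>x. T x = y \<and> norm x \<le> 2 * M * norm y"
proof -
  obtain g where g1: "\<And>y. norm (g y) \<le> M * norm y" and g2: "\<And>y. norm (y - T (g y)) \<le> norm y / 2"
    using approx by metis
  define r where "r n = ((\<lambda>z. z - T (g z)) ^^ n) y" for n
  have rS: "r (Suc n) = r n - T (g (r n))" for n by (simp add: r_def)
  have rb: "norm (r n) \<le> norm y / 2 ^ n" for n
  proof (induction n)
    case 0 then show ?case by (simp add: r_def)
  next
    case (Suc n)
    have "norm (r (Suc n)) \<le> norm (r n) / 2" using g2 rS by simp
    also have "\<dots> \<le> norm y / 2 ^ Suc n" using Suc by (simp add: field_simps)
    finally show ?case .
  qed
  define d where "d n = g (r n)" for n
  have db: "norm (d n) \<le> M * norm y * (1/2) ^ n" for n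
  proof -
    have "norm (d n) \<le> M * norm (r n)" using g1 d_def by simp
    also have "\<dots> \<le> M * (norm y / 2 ^ n)" using rb M by (intro mult_left_mono) auto
    finally show ?thesis by (simp add: power_divide)
  qed
  have sg: "summable (\<lambda>n. M * norm y * (1/2::real) ^ n)"
    by (intro summable_mult summable_geometric) simp
  have sd: "summable (\<lambda>n. norm (d n))"
    by (rule summable_comparison_test'[OF sg]) (use db in auto)
  have sd': "summable d" using sd by (rule summable_norm_cancel)
  have "norm (suminf d) \<le> (\<Sum>n. norm (d n))" by (rule summable_norm[OF sd])
  also have "\<dots> \<le> (\<Sum>n. M * norm y * (1/2::real) ^ n)"
    by (rule suminf_le[OF _ sd sg]) (use db in auto)
  also have "\<dots> = 2 * M * norm y"
    using suminf_mult[OF summable_geometric[of "1/2::real"]] suminf_geometric[of "1/2::real"] by simp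
  finally have nb: "norm (suminf d) \<le> 2 * M * norm y" .
  have r0: "r \<longlonglongrightarrow> 0"
  proof (rule Lim_null_comparison)
    show "\<forall>\<^sub>F n in sequentially. norm (r n) \<le> norm y * (1/2::real) ^ n"
      using rb by (simp add: power_divide)
    have "(\<lambda>n. norm y * (1/2::real) ^ n) \<longlonglongrightarrow> norm y * 0"
      by (intro tendsto_mult tendsto_const LIMSEQ_power_zero) auto
    then show "(\<lambda>n. norm y * (1/2::real) ^ n) \<longlonglongrightarrow> 0" by simp
  qed
  have "(\<lambda>n. r n - r (Suc n)) sums (r 0 - 0)" by (rule telescope_sums'[OF r0])
  moreover have "(\<lambda>n. r n - r (Suc n)) = (\<lambda>n. T (d n))" by (simp add: rS d_def)
  ultimately have "(\<lambda>n. T (d n)) sums y" by (simp add: r_def)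
  moreover have "(\<lambda>n. T (d n)) sums T (suminf d)"
    using bounded_linear.sums[OF bl summable_sums[OF sd']] .
  ultimately have "T (suminf d) = y" using sums_unique2 by blast
  with nb show ?thesis by blast
qed

lemma bounded_inverse:
  fixes T :: "'a::banach \<Rightarrow> 'b::banach"
  assumes bl: "bounded_linear T" and bj: "bij T"
  shows "\<exists>B>0. \<forall>x. norm x \<le> B * norm (T x)"
proof -
  define G where "G = range (\<lambda>n::nat. closure (T ` cball 0 (real n)))"
  have UG: "\<Union>G = UNIV"
  proof (rule set_eqI, rule iffI)
    fix y :: 'b
    show "y \<in> \<Union>G" 
    proof -
      obtain x where x: "y = T x" using bj unfolding bij_def surj_def by blast
      have "norm x \<le> real (nat \<lceil>norm x\<rceil>)" by (rule real_nat_ceiling_ge)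
      then have "x \<in> cball 0 (real (nat \<lceil>norm x\<rceil>))" by (simp only: mem_cball_0)
      then have "y \<in> T ` cball 0 (real (nat \<lceil>norm x\<rceil>))" using x by (rule rev_image_eqI)
      then have "y \<in> closure (T ` cball 0 (real (nat \<lceil>norm x\<rceil>)))" using closure_subset by (rule subsetD[rotated])
      moreover have "closure (T ` cball 0 (real (nat \<lceil>norm x\<rceil>))) \<in> G" unfolding G_def by (rule rangeI)
      ultimately show ?thesis by (rule UnionI[rotated])
    qed
  qed simp
  have "\<exists>n. interior (closure (T ` cball 0 (real n))) \<noteq> {}"
  proof (rule ccontr)
    assume "\<not> ?thesis"
    then have "euclidean interior_of \<Union>G = {}"
    proof (intro Baire_category_alt)
      show "completely_metrizable_space (euclidean::'b topology) \<or> locally_compact_space (euclidean::'b topology) \<and> regular_space (euclidean::'b topology)"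
        using completely_metrizable_space_euclidean by blast
      show "countable G" unfolding G_def by simp
      fix S assume "S \<in> G"
      then obtain m where m: "S = closure (T ` cball 0 (real m))" unfolding G_def by blast
      show "closedin euclidean S \<and> euclidean interior_of S = {}"
        using \<open>\<not> (\<exists>n. interior (closure (T ` cball 0 (real n))) \<noteq> {})\<close> m
        by (simp add: closed_closedin[symmetric])
    qed
    then show False using UG by simp
  qed
  then obtain n y0 where "y0 \<in> interior (closure (T ` cball 0 (real n)))" by blast
  then obtain r where r: "r > 0" "ball y0 r \<subseteq> closure (T ` cball 0 (real n))"
    by (auto simp: mem_interior)
  define M where "M = 4 * (real n + 1) / r"
  have M: "M > 0" using r by (simp add: M_def)
  have approx: "\<exists>x. norm x \<le> M * norm y \<and> norm (y - T x) \<le> norm y / 2" for y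
  proof (cases "y = 0")
    case True
    have "T 0 = 0" using bl by (simp add: linear_simps)
    then show ?thesis using True by (intro exI[of _ 0]) simp
  next
    case False
    define c where "c = r / (2 * norm y)"
    have c: "c > 0" using r False by (simp add: c_def)
    have ny: "norm (c *\<^sub>R y) = r / 2" using r False by (simp add: c_def)
    have r8: "r/8 > 0" using r by simp
    have "y0 + c *\<^sub>R y \<in> closure (T ` cball 0 (real n))"
      using r ny by (intro subsetD[OF r(2)]) (simp add: dist_norm)
    then have "\<exists>z\<in>T ` cball 0 (real n). dist z (y0 + c *\<^sub>R y) < r/8"
      using r8 unfolding closure_approachable by blast
    then obtain a where a: "a \<in> cball 0 (real n)" "dist (T a) (y0 + c *\<^sub>R y) < r/8"
      by blast
    have "y0 \<in> closure (T ` cball 0 (real n))"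
      using r by (intro subsetD[OF r(2)]) simp
    then have "\<exists>z\<in>T ` cball 0 (real n). dist z y0 < r/8"
      using r8 unfolding closure_approachable by blast
    then obtain b where b: "b \<in> cball 0 (real n)" "dist (T b) y0 < r/8"
      by blast
    define x where "x = (1/c) *\<^sub>R (a - b)"
    have nab: "norm (a - b) \<le> 2 * real n"
      using a b norm_triangle_ineq4[of a b] by simp
    have "norm x = norm (a - b) / c" using c by (simp add: x_def)
    also have "\<dots> \<le> 2 * real n / c" using nab c by (simp add: divide_right_mono)
    also have "\<dots> \<le> M * norm y" using c r False
      by (simp add: M_def c_def field_simps)
    finally have 1: "norm x \<le> M * norm y" .
    have Tx: "T x = (1/c) *\<^sub>R (T a - T b)"
      using bl by (simp add: x_def linear_simps)
    have "c *\<^sub>R y - (T a - T b) = (y0 + c *\<^sub>R y - T a) + (T b - y0)" by (simp add: algebra_simps)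
    then have "norm (c *\<^sub>R y - (T a - T b)) \<le> norm (y0 + c *\<^sub>R y - T a) + norm (T b - y0)"
      by (metis norm_triangle_ineq)
    also have "\<dots> < r/4" using a b by (simp add: dist_norm norm_minus_commute)
    finally have lt: "norm (c *\<^sub>R y - (T a - T b)) < r / 4" .
    have "y - T x = (1/c) *\<^sub>R (c *\<^sub>R y - (T a - T b))" using c by (simp add: Tx algebra_simps)
    then have "norm (y - T x) = norm (c *\<^sub>R y - (T a - T b)) / c" using c by simp
    also have "\<dots> \<le> (r/4) / c" using lt c by (intro divide_right_mono) auto
    also have "\<dots> = norm y / 2" using r False by (simp add: c_def field_simps)
    finally show ?thesis using 1 by blast
  qed
  show ?thesis
  proof (intro exI[of _ "2*M"] conjI allI)
    show "0 < 2 * M" using M by simp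
    fix x
    obtain x' where "T x' = T x" "norm x' \<le> 2 * M * norm (T x)"
      using approx_imp_preimage[OF bl M approx] by blast
    then show "norm x \<le> 2 * M * norm (T x)" using bj by (metis bij_def injD)
  qed
qed



lemma quot_mono:
  fixes a b :: "'a::real_normed_vector"
  assumes s: "0 < s" "s \<le> t"
  shows "(norm (a + s *\<^sub>R b) - norm a) / s \<le> (norm (a + t *\<^sub>R b) - norm a) / t"
proof -
  have t: "t > 0" using s by simp
  have eq: "a + s *\<^sub>R b = (1 - s/t) *\<^sub>R a + (s/t) *\<^sub>R (a + t *\<^sub>R b)"
    using t by (simp add: algebra_simps)
  have "norm (a + s *\<^sub>R b) \<le> norm ((1 - s/t) *\<^sub>R a) + norm ((s/t) *\<^sub>R (a + t *\<^sub>R b))"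
    unfolding eq by (rule norm_triangle_ineq)
  also have "\<dots> = (1 - s/t) * norm a + (s/t) * norm (a + t *\<^sub>R b)"
    using s t by simp
  finally have "norm (a + s *\<^sub>R b) - norm a \<le> (s/t) * (norm (a + t *\<^sub>R b) - norm a)"
    by (simp add: algebra_simps)
  then show ?thesis using s t by (simp add: field_simps)
qed

lemma quot_lower:
  fixes a b :: "'a::real_normed_vector"
  assumes s: "0 < s"
  shows "- norm b \<le> (norm (a + s *\<^sub>R b) - norm a) / s"
proof -
  have "norm a \<le> norm (a + s *\<^sub>R b) + norm (s *\<^sub>R b)"
    by (metis add_diff_cancel norm_triangle_ineq4)
  then have "norm a \<le> norm (a + s *\<^sub>R b) + s * norm b" using s by simp
  then show ?thesis using s by (simp add: field_simps)
qed

lemma sip_bound: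
  fixes a b :: "'a::real_normed_vector"
  assumes a: "a \<noteq> 0" and le: "sip_plus a b / (norm a)\<^sup>2 \<le> lam"
  shows "\<forall>e>0. \<exists>d>0. \<forall>s. 0 < s \<and> s < d \<longrightarrow> norm (a + s *\<^sub>R b) \<le> norm a + s * (lam * norm a + e)"
proof -
  define q where "q = (\<lambda>s::real. (norm (a + s *\<^sub>R b) - norm a) / s)"
  define L where "L = Inf (q ` {0<..})"
  have ne: "q ` {0<..} \<noteq> {}" by auto
  have bdd: "bdd_below (q ` {0<..})"
    unfolding bdd_below_def using quot_lower by (auto simp: q_def)
  have Lq: "L \<le> q s" if "s > 0" for s
    unfolding L_def using bdd that by (auto intro: cInf_lower)
  have lim: "(q \<longlongrightarrow> L) (at_right 0)"
  proof (rule tendstoI)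
    fix e :: real assume e: "e > 0"
    obtain s0 where s0: "s0 > 0" "q s0 < L + e"
      using cInf_lessD[OF ne, of "L + e"] e unfolding L_def by auto
    show "\<forall>\<^sub>F s in at_right 0. dist (q s) L < e"
      using eventually_at_right_real[OF s0(1)]
    proof (rule eventually_mono)
      fix s assume "s \<in> {0<..<s0}"
      then have "q s \<le> q s0" "L \<le> q s" using quot_mono[of s s0] Lq by (auto simp: q_def)
      then show "dist (q s) L < e" using s0 by (simp add: dist_real_def)
    qed
  qed
  have "Lim (at_right 0) q = L" by (rule tendsto_Lim[OF _ lim]) simp
  then have sipL: "sip_plus a b = norm a * L" by (simp add: sip_plus_def q_def)
  have na: "norm a > 0" using a by simp
  have "L / norm a \<le> lam" using le na sipL by (simp add: power2_eq_square)
  then have Llam: "L \<le> lam * norm a" using na by (simp add: field_simps)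
  show ?thesis
  proof (intro allI impI)
    fix e :: real assume e: "e > 0"
    obtain s0 where s0: "s0 > 0" "q s0 < L + e"
      using cInf_lessD[OF ne, of "L + e"] e unfolding L_def by auto
    show "\<exists>d>0. \<forall>s. 0 < s \<and> s < d \<longrightarrow> norm (a + s *\<^sub>R b) \<le> norm a + s * (lam * norm a + e)"
    proof (intro exI[of _ s0] conjI allI impI)
      fix s assume s: "0 < s \<and> s < s0"
      then have "q s \<le> q s0" using quot_mono[of s s0] by (simp add: q_def)
      then have "q s \<le> lam * norm a + e" using s0 Llam by simp
      then show "norm (a + s *\<^sub>R b) \<le> norm a + s * (lam * norm a + e)"
        using s by (simp add: q_def field_simps)
    qed (use s0 in auto)
  qed
qed

lemma dini_nonincr:
  fixes \<psi> :: "real \<Rightarrow> real"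
  assumes cont: "continuous_on {0..} \<psi>"
    and D: "\<And>t e. t \<ge> 0 \<Longrightarrow> e > 0 \<Longrightarrow> \<exists>d>0. \<forall>s. 0 < s \<and> s < d \<longrightarrow> \<psi> (t + s) \<le> \<psi> t + s * e"
    and T: "T \<ge> 0"
  shows "\<psi> T \<le> \<psi> 0"
proof -
  have main: "\<psi> T \<le> \<psi> 0 + e * T" if e: "e > 0" for e
  proof -
    define S where "S = {t \<in> {0..T}. \<psi> t \<le> \<psi> 0 + e * t}"
    have cS: "closed S" unfolding S_def
      by (rule continuous_on_closed_Collect_le)
         (auto intro!: continuous_intros continuous_on_subset[OF cont])
    have ne: "S \<noteq> {}" using T by (auto simp: S_def intro!: exI[of _ 0])
    have bS: "bdd_above S" by (auto simp: S_def bdd_above_def)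
    define c where "c = Sup S"
    have cS': "c \<in> S" unfolding c_def by (rule closed_contains_Sup[OF ne bS cS])
    have cT: "c \<le> T" using cS' by (simp add: S_def)
    have "c = T"
    proof (rule ccontr)
      assume "c \<noteq> T"
      then have cT': "c < T" using cT by simp
      have c0: "c \<ge> 0" using cS' by (simp add: S_def)
      obtain d where d: "d > 0" "\<forall>s. 0 < s \<and> s < d \<longrightarrow> \<psi> (c + s) \<le> \<psi> c + s * e"
        using D[OF c0 e] by blast
      define s where "s = min (d/2) (T - c)"
      have s: "0 < s" "s < d" "c + s \<le> T" using d cT' by (auto simp: s_def)
      have "\<psi> (c + s) \<le> \<psi> c + s * e" using d s by simp
      also have "\<dots> \<le> \<psi> 0 + e * (c + s)" using cS' by (simp add: S_def algebra_simps)
      finally have "c + s \<in> S" using s c0 by (simp add: S_def)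
      then have "c + s \<le> c" unfolding c_def using bS by (rule cSup_upper)
      then show False using s by simp
    qed
    then show ?thesis using cS' by (simp add: S_def)
  qed
  show ?thesis
  proof (rule ccontr)
    assume "\<not> ?thesis"
    then have gt: "\<psi> T > \<psi> 0" by simp
    then have "T > 0" using T by (cases "T = 0") auto
    then show False
      using main[of "(\<psi> T - \<psi> 0) / (2 * T)"] gt by (simp add: field_simps)
  qed
qed

lemma gronwall_dini:
  fixes \<phi> :: "real \<Rightarrow> real" and lam :: real
  assumes cont: "continuous_on {0..} \<phi>" and nn: "\<And>t. t \<ge> 0 \<Longrightarrow> \<phi> t \<ge> 0"
    and D: "\<And>t e. t \<ge> 0 \<Longrightarrow> e > 0 \<Longrightarrow> \<exists>d>0. \<forall>s. 0 < s \<and> s < d \<longrightarrow>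
               \<phi> (t + s) \<le> \<phi> t + s * (lam * \<phi> t + e)"
    and lam: "lam < 0" and T: "T \<ge> 0"
  shows "\<phi> T \<le> exp (lam * T) * \<phi> 0"
proof -
  define \<psi> where "\<psi> t = exp (- lam * t) * \<phi> t" for t
  have "\<psi> T \<le> \<psi> 0"
  proof (rule dini_nonincr[OF _ _ T])
    show "continuous_on {0..} \<psi>" unfolding \<psi>_def by (intro continuous_intros cont)
    fix t e :: real assume t: "t \<ge> 0" and e: "e > 0"
    define E where "E = exp (- lam * (t + 1))"
    have E: "E > 0" by (simp add: E_def)
    obtain d where d: "d > 0" "\<forall>s. 0 < s \<and> s < d \<longrightarrow> \<phi> (t + s) \<le> \<phi> t + s * (lam * \<phi> t + e / E)"
      using D[OF t, of "e / E"] e E by auto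
    show "\<exists>d>0. \<forall>s. 0 < s \<and> s < d \<longrightarrow> \<psi> (t + s) \<le> \<psi> t + s * e"
    proof (intro exI[of _ "min d 1"] conjI allI impI)
      fix s assume s: "0 < s \<and> s < min d 1"
      have p0: "\<phi> (t + s) \<le> \<phi> t + s * (lam * \<phi> t + e / E)"
        using d s by simp
      then have p: "\<phi> (t + s) \<le> \<phi> t + s * (lam * \<phi> t) + s * (e / E)"
        by (simp add: distrib_left add.assoc)
      have ex: "exp (- lam * (t + s)) = exp (- lam * t) * exp (- lam * s)"
        by (simp add: algebra_simps flip: exp_add)
      have q1: "exp (- lam * (t + s)) * (1 + lam * s) \<le> exp (- lam * t)"
      proof -
        have "(1 + lam * s) \<le> exp (lam * s)" by simp
        then have "exp (- lam * s) * (1 + lam * s) \<le> exp (- lam * s) * exp (lam * s)"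
          by (intro mult_left_mono) auto
        then have "exp (- lam * s) * (1 + lam * s) \<le> 1" by (simp flip: exp_add)
        then show ?thesis unfolding ex
          by (metis mult.assoc mult_left_mono exp_ge_zero mult.right_neutral)
      qed
      have q2: "exp (- lam * (t + s)) \<le> E" unfolding E_def using s lam
        by (simp add: mult_left_mono_neg)
      have "\<psi> (t + s) \<le> exp (- lam * (t + s)) * (\<phi> t + s * (lam * \<phi> t) + s * (e / E))"
        unfolding \<psi>_def by (intro mult_left_mono p) auto
      also have "\<dots> = (exp (- lam * (t + s)) * (1 + lam * s)) * \<phi> t + exp (- lam * (t + s)) * (s * (e / E))"
        by (simp add: algebra_simps)
      also have "\<dots> \<le> exp (- lam * t) * \<phi> t + E * (s * (e / E))"
        using q1 q2 nn[OF t] s e E by (intro add_mono mult_right_mono) auto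
      also have "\<dots> = \<psi> t + s * e" using E by (simp add: \<psi>_def)
      finally show "\<psi> (t + s) \<le> \<psi> t + s * e" .
    qed (use d in auto)
  qed
  then have "exp (- lam * T) * \<phi> T \<le> \<phi> 0" by (simp add: \<psi>_def)
  then have "exp (lam * T) * (exp (- lam * T) * \<phi> T) \<le> exp (lam * T) * \<phi> 0"
    by (intro mult_left_mono) auto
  then show ?thesis by (simp add: mult.assoc[symmetric] flip: exp_add)
qed



lemma deriv_eps:
  fixes u :: "real \<Rightarrow> 'a::real_normed_vector"
  assumes "(u has_vector_derivative D) (at t within {0..})" "t \<ge> 0" "e > 0"
  shows "\<exists>d>0. \<forall>s. 0 < s \<and> s < d \<longrightarrow> norm (u (t + s) - u t - s *\<^sub>R D) \<le> e * s"
proof -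
  from assms(1) have "\<forall>e>0. \<exists>d>0. \<forall>y\<in>{0..}. norm (y - t) < d \<longrightarrow> norm (u y - u t - (y - t) *\<^sub>R D) \<le> e * norm (y - t)"
    unfolding has_vector_derivative_def has_derivative_within_alt by blast
  then obtain d where d: "d > 0" "\<forall>y\<in>{0..}. norm (y - t) < d \<longrightarrow> norm (u y - u t - (y - t) *\<^sub>R D) \<le> e * norm (y - t)"
    using assms(3) by blast
  show ?thesis
  proof (intro exI[of _ d] conjI allI impI)
    fix s assume s: "0 < s \<and> s < d"
    then show "norm (u (t + s) - u t - s *\<^sub>R D) \<le> e * s"
      using d(2)[rule_format, of "t + s"] assms(2) by simp
  qed (use d in auto)
qed

lemma dist_dini:
  fixes \<Theta> :: "'v::real_normed_vector \<Rightarrow> 'w::real_normed_vector" and g :: "'v \<Rightarrow> 'v"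
  assumes bl: "bounded_linear \<Theta>" and inj: "inj \<Theta>"
    and Mb: "M_Theta \<Theta> g \<le> ereal lam"
    and dw: "\<And>e. e > 0 \<Longrightarrow> \<exists>d>0. \<forall>s. 0 < s \<and> s < d \<longrightarrow> norm (w s - w0 - s *\<^sub>R g w0) \<le> e * s"
    and du: "\<And>e. e > 0 \<Longrightarrow> \<exists>d>0. \<forall>s. 0 < s \<and> s < d \<longrightarrow> norm (u s - u0 - s *\<^sub>R g u0) \<le> e * s"
    and e: "e > 0"
  shows "\<exists>d>0. \<forall>s. 0 < s \<and> s < d \<longrightarrow>
           norm (\<Theta> (w s - u s)) \<le> norm (\<Theta> (w0 - u0)) + s * (lam * norm (\<Theta> (w0 - u0)) + e)"
proof -
  obtain K where K: "K > 0" "\<And>x. norm (\<Theta> x) \<le> norm x * K"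
    using bounded_linear.pos_bounded[OF bl] by blast
  have eK: "e / (4 * K) > 0" using e K by simp
  obtain d1 where d1: "d1 > 0" "\<forall>s. 0 < s \<and> s < d1 \<longrightarrow> norm (w s - w0 - s *\<^sub>R g w0) \<le> e / (4 * K) * s"
    using dw[OF eK] by blast
  obtain d2 where d2: "d2 > 0" "\<forall>s. 0 < s \<and> s < d2 \<longrightarrow> norm (u s - u0 - s *\<^sub>R g u0) \<le> e / (4 * K) * s"
    using du[OF eK] by blast
  define a where "a = \<Theta> (w0 - u0)"
  define b where "b = \<Theta> (g w0 - g u0)"
  have R: "norm (\<Theta> (w s - u s) - a - s *\<^sub>R b) \<le> e / 2 * s" if s: "0 < s" "s < d1" "s < d2" for s
  proof -
    have eq: "\<Theta> (w s - u s) - a - s *\<^sub>R b = \<Theta> ((w s - w0 - s *\<^sub>R g w0) - (u s - u0 - s *\<^sub>R g u0))"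
      using bl unfolding a_def b_def by (simp add: linear_simps algebra_simps)
    have "norm (\<Theta> ((w s - w0 - s *\<^sub>R g w0) - (u s - u0 - s *\<^sub>R g u0)))
        \<le> norm ((w s - w0 - s *\<^sub>R g w0) - (u s - u0 - s *\<^sub>R g u0)) * K" by (rule K(2))
    also have "\<dots> \<le> (norm (w s - w0 - s *\<^sub>R g w0) + norm (u s - u0 - s *\<^sub>R g u0)) * K"
      using K by (intro mult_right_mono norm_triangle_ineq4) auto
    also have "\<dots> \<le> (e / (4 * K) * s + e / (4 * K) * s) * K"
      using K d1 d2 s by (intro mult_right_mono add_mono) auto
    also have "\<dots> = e / 2 * s" using K by (simp add: field_simps)
    finally show ?thesis unfolding eq .
  qed
  show ?thesis
  proof (cases "w0 = u0")
    case True
    then have ab: "a = 0" "b = 0" using bl unfolding a_def b_def by (simp_all add: linear_simps)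
    show ?thesis
    proof (intro exI[of _ "min d1 d2"] conjI allI impI)
      fix s assume s: "0 < s \<and> s < min d1 d2"
      then have "norm (\<Theta> (w s - u s)) \<le> e / 2 * s" using R[of s] ab by simp
      also have "\<dots> \<le> s * e" using s e by simp
      finally show "norm (\<Theta> (w s - u s)) \<le> norm (\<Theta> (w0 - u0)) + s * (lam * norm (\<Theta> (w0 - u0)) + e)"
        using True bl by (simp add: linear_simps)
    qed (use d1 d2 in auto)
  next
    case False
    have a0: "a \<noteq> 0"
    proof
      assume "a = 0"
      then have "\<Theta> (w0 - u0) = \<Theta> 0" using bl by (simp add: a_def linear_simps)
      then have "w0 - u0 = 0" by (rule injD[OF inj])
      then show False using False by simp
    qed
    have "ereal (sip_plus a b / (norm a)\<^sup>2) \<le> M_Theta \<Theta> g"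
      unfolding M_Theta_def a_def b_def
      by (rule SUP_upper2[of "(w0, u0)"]) (use False bl in \<open>auto simp: linear_simps\<close>)
    then have le: "sip_plus a b / (norm a)\<^sup>2 \<le> lam" using Mb by (meson ereal_less_eq(3) order_trans)
    have e2: "e / 2 > 0" using e by simp
    obtain d3 where d3: "d3 > 0" "\<forall>s. 0 < s \<and> s < d3 \<longrightarrow> norm (a + s *\<^sub>R b) \<le> norm a + s * (lam * norm a + e / 2)"
      using sip_bound[OF a0 le] e2 by blast
    show ?thesis
    proof (intro exI[of _ "min d1 (min d2 d3)"] conjI allI impI)
      fix s assume s: "0 < s \<and> s < min d1 (min d2 d3)"
      have "\<Theta> (w s - u s) = (a + s *\<^sub>R b) + (\<Theta> (w s - u s) - a - s *\<^sub>R b)" by simp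
      then have "norm (\<Theta> (w s - u s)) \<le> norm (a + s *\<^sub>R b) + norm (\<Theta> (w s - u s) - a - s *\<^sub>R b)"
        by (metis norm_triangle_ineq)
      also have "\<dots> \<le> (norm a + s * (lam * norm a + e / 2)) + e / 2 * s"
        using R[of s] d3 s by (intro add_mono) auto
      also have "\<dots> = norm a + s * (lam * norm a + e)" by (simp add: algebra_simps)
      finally show "norm (\<Theta> (w s - u s)) \<le> norm (\<Theta> (w0 - u0)) + s * (lam * norm (\<Theta> (w0 - u0)) + e)"
        by (simp add: a_def)
    qed (use d1 d2 d3 in auto)
  qed
qed



theorem mainTheorem13:
  fixes h :: "'v::banach \<Rightarrow> 'v" and k :: nat
    and f :: "real \<Rightarrow> 'v \<Rightarrow> 'v" and dt :: real
    and \<Theta> :: "'v \<Rightarrow> 'w::banach" and lam :: real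
  assumes "C1_diffeo h" and "k \<ge> 1" and "h ^^ k = id"
    and "dt > 0"
    and "\<And>n u t. 1 \<le> n \<Longrightarrow> n \<le> k \<Longrightarrow> t \<ge> 0 \<Longrightarrow>
           f t ((h ^^ n) u) = frechet_derivative (h ^^ n) (at u) (f (t + real n * dt) u)"
    and "GL \<Theta>" and "lam < 0"
    and "\<And>t. t \<ge> 0 \<Longrightarrow> M_Theta \<Theta> (f t) \<le> ereal lam"
  shows "\<forall>u. is_solution f u \<longrightarrow>
           (\<exists>p. (\<forall>t\<ge>0. (\<lambda>n. u (t + real n * real k * dt)) \<longlonglongrightarrow> p t)
              \<and> (\<forall>t\<ge>0. p (t + real k * dt) = p t)
              \<and> (\<exists>C \<alpha>. \<alpha> > 0 \<and> (\<forall>t\<ge>0. norm (u t - p t) \<le> C * exp (- \<alpha> * t))))"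
proof (intro allI impI)
  fix u assume sol: "is_solution f u"
  note hk = assms(3) and fh = assms(5) and lam = assms(7) and Mb = assms(8)
  have bl: "bounded_linear \<Theta>" and bj: "bij \<Theta>" using assms(6) by (auto simp: GL_def)
  have inj: "inj \<Theta>" using bj by (simp add: bij_def)
  define T where "T = real k * dt"
  have T: "T > 0" using assms(2,4) by (simp add: T_def)
  have fp: "f t x = f (t + T) x" if "t \<ge> 0" for t x
    using fh[of k t x] assms(2) that by (simp add: hk T_def)
  have du: "(u has_vector_derivative f t (u t)) (at t within {0..})" if "t \<ge> 0" for t
    using sol that by (simp add: is_solution_def)
  have ucont: "continuous_on {0..} u"
    unfolding continuous_on_eq_continuous_within
    using du has_vector_derivative_continuous by (metis atLeast_iff)
  define \<phi> where "\<phi> t = norm (\<Theta> (u (t + T) - u t))" for t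
  have \<phi>cont: "continuous_on {0..} \<phi>"
  proof -
    have c1: "continuous_on {0..} (\<lambda>t. u (t + T))"
      by (rule continuous_on_compose2[OF ucont]) (use T in \<open>auto intro!: continuous_intros\<close>)
    have "continuous_on {0..} (\<lambda>t. \<Theta> (u (t + T) - u t))"
      by (rule continuous_on_compose2[OF linear_continuous_on[OF bl]]) (auto intro!: continuous_intros c1 ucont)
    then show ?thesis unfolding \<phi>_def by (intro continuous_intros)
  qed
  have \<phi>D: "\<exists>d>0. \<forall>s. 0 < s \<and> s < d \<longrightarrow> \<phi> (t + s) \<le> \<phi> t + s * (lam * \<phi> t + e)"
    if t: "t \<ge> 0" and e: "e > 0" for t e
  proof -
    have "\<exists>d>0. \<forall>s. 0 < s \<and> s < d \<longrightarrow>
           norm (\<Theta> (u (t + T + s) - u (t + s))) \<le> norm (\<Theta> (u (t + T) - u t)) + s * (lam * norm (\<Theta> (u (t + T) - u t)) + e)"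
    proof (rule dist_dini[OF bl inj Mb[OF t], where w = "\<lambda>s. u (t + T + s)" and u = "\<lambda>s. u (t + s)"])
      fix e' :: real assume e': "e' > 0"
      have "f (t + T) (u (t + T)) = f t (u (t + T))" using fp[OF t] by simp
      then show "\<exists>d>0. \<forall>s. 0 < s \<and> s < d \<longrightarrow> norm (u (t + T + s) - u (t + T) - s *\<^sub>R f t (u (t + T))) \<le> e' * s"
        using deriv_eps[OF du[of "t + T"] _ e'] t T by simp
      show "\<exists>d>0. \<forall>s. 0 < s \<and> s < d \<longrightarrow> norm (u (t + s) - u t - s *\<^sub>R f t (u t)) \<le> e' * s"
        using deriv_eps[OF du[OF t] t e'] .
    qed (rule e)
    then show ?thesis unfolding \<phi>_def by (simp add: add_ac)
  qed
  have \<phi>bound: "\<phi> t \<le> exp (lam * t) * \<phi> 0" if "t \<ge> 0" for t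
    by (rule gronwall_dini[OF \<phi>cont _ \<phi>D lam that]) (simp add: \<phi>_def)
  obtain B where B: "B > 0" "\<And>x. norm x \<le> B * norm (\<Theta> x)"
    using bounded_inverse[OF bl bj] by blast
  define r where "r = exp (lam * T)"
  have r: "0 < r" "r < 1" using lam T by (auto simp: r_def mult_neg_pos)
  define C0 where "C0 = B * \<phi> 0"
  have C0: "C0 \<ge> 0" using B by (simp add: C0_def \<phi>_def)
  have step: "norm (u (t + T) - u t) \<le> C0 * exp (lam * t)" if "t \<ge> 0" for t
  proof -
    have "norm (u (t + T) - u t) \<le> B * \<phi> t" using B by (simp add: \<phi>_def)
    also have "\<dots> \<le> B * (exp (lam * t) * \<phi> 0)" using B \<phi>bound[OF that] by simp
    finally show ?thesis by (simp add: C0_def mult_ac)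
  qed
  have seq: "(\<lambda>n. u (t + real n * real k * dt)) \<longlonglongrightarrow> u t + (\<Sum>n. u (t + real (Suc n) * T) - u (t + real n * T))
           \<and> norm (\<Sum>n. u (t + real (Suc n) * T) - u (t + real n * T)) \<le> C0 / (1 - r) * exp (lam * t)"
    if t: "t \<ge> 0" for t
  proof -
    define x where "x n = u (t + real n * T)" for n
    define d where "d n = x (Suc n) - x n" for n
    have db: "norm (d n) \<le> C0 * exp (lam * t) * r ^ n" for n
    proof -
      have "norm (d n) \<le> C0 * exp (lam * (t + real n * T))"
        using step[of "t + real n * T"] t T by (simp add: d_def x_def algebra_simps)
      also have "exp (lam * (t + real n * T)) = exp (lam * t) * r ^ n"
        by (simp add: r_def algebra_simps exp_add flip: exp_of_nat_mult)
      finally show ?thesis by (simp add: mult_ac)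
    qed
    have sg: "summable (\<lambda>n. C0 * exp (lam * t) * r ^ n)"
      using r by (intro summable_mult summable_geometric) simp
    have sd: "summable (\<lambda>n. norm (d n))"
      by (rule summable_comparison_test'[OF sg]) (use db in auto)
    have sd': "summable d" using sd by (rule summable_norm_cancel)
    have "(\<lambda>n. x 0 + (\<Sum>i<n. d i)) \<longlonglongrightarrow> x 0 + suminf d"
      by (intro tendsto_add tendsto_const summable_LIMSEQ[OF sd'])
    moreover have "(\<lambda>n. x 0 + (\<Sum>i<n. d i)) = x"
      by (simp add: d_def sum_lessThan_telescope)
    moreover have "x = (\<lambda>n. u (t + real n * real k * dt))"
      by (rule ext) (simp add: x_def T_def mult_ac)
    ultimately have 1: "(\<lambda>n. u (t + real n * real k * dt)) \<longlonglongrightarrow> u t + suminf d"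
      by (simp add: x_def)
    have "norm (suminf d) \<le> (\<Sum>n. norm (d n))" by (rule summable_norm[OF sd])
    also have "\<dots> \<le> (\<Sum>n. C0 * exp (lam * t) * r ^ n)"
      by (rule suminf_le[OF _ sd sg]) (use db in auto)
    also have "\<dots> = C0 * exp (lam * t) / (1 - r)"
      using suminf_mult[OF summable_geometric[of r]] suminf_geometric[of r] r by simp
    finally have 2: "norm (suminf d) \<le> C0 / (1 - r) * exp (lam * t)" by simp
    have dd: "d = (\<lambda>n. u (t + real (Suc n) * T) - u (t + real n * T))"
      by (rule ext) (simp add: d_def x_def)
    show ?thesis unfolding dd[symmetric] using 1 2 by blast
  qed
  define p where "p t = lim (\<lambda>n. u (t + real n * real k * dt))" for t
  have pconv: "(\<lambda>n. u (t + real n * real k * dt)) \<longlonglongrightarrow> p t" if "t \<ge> 0" for t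
  proof -
    have "(\<lambda>n. u (t + real n * real k * dt)) \<longlonglongrightarrow> u t + (\<Sum>n. u (t + real (Suc n) * T) - u (t + real n * T))"
      using seq[OF that] by (rule conjunct1)
    then show ?thesis unfolding p_def by (rule convergentI[THEN convergent_LIMSEQ_iff[THEN iffD1]])
  qed
  show "\<exists>p. (\<forall>t\<ge>0. (\<lambda>n. u (t + real n * real k * dt)) \<longlonglongrightarrow> p t)
              \<and> (\<forall>t\<ge>0. p (t + real k * dt) = p t)
              \<and> (\<exists>C \<alpha>. \<alpha> > 0 \<and> (\<forall>t\<ge>0. norm (u t - p t) \<le> C * exp (- \<alpha> * t)))"
  proof (intro exI[of _ p] conjI allI impI)
    fix t :: real assume t: "t \<ge> 0"
    show "(\<lambda>n. u (t + real n * real k * dt)) \<longlonglongrightarrow> p t" by (rule pconv[OF t])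
    have tT: "t + real k * dt \<ge> 0" using t T by (simp add: T_def)
    have "(\<lambda>n. u (t + real (Suc n) * real k * dt)) \<longlonglongrightarrow> p t"
      using LIMSEQ_Suc[OF pconv[OF t]] by simp
    moreover have "(\<lambda>n. u (t + real (Suc n) * real k * dt)) = (\<lambda>n. u (t + real k * dt + real n * real k * dt))"
      by (simp add: algebra_simps)
    ultimately have "(\<lambda>n. u (t + real k * dt + real n * real k * dt)) \<longlonglongrightarrow> p t" by simp
    then show "p (t + real k * dt) = p t" by (rule LIMSEQ_unique[OF pconv[OF tT]])
  next
    show "\<exists>C \<alpha>. \<alpha> > 0 \<and> (\<forall>t\<ge>0. norm (u t - p t) \<le> C * exp (- \<alpha> * t))"
    proof (rule exI[of _ "C0 / (1 - r)"], rule exI[of _ "- lam"], intro conjI allI impI)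
      show "- lam > 0" using lam by simp
      fix t :: real assume t: "t \<ge> 0"
      have "p t = u t + (\<Sum>n. u (t + real (Suc n) * T) - u (t + real n * T))"
        by (rule LIMSEQ_unique[OF pconv[OF t] conjunct1[OF seq[OF t]]])
      then have "norm (u t - p t) = norm (\<Sum>n. u (t + real (Suc n) * T) - u (t + real n * T))"
        by (simp add: norm_minus_commute)
      also have "\<dots> \<le> C0 / (1 - r) * exp (lam * t)" by (rule conjunct2[OF seq[OF t]])
      finally show "norm (u t - p t) \<le> C0 / (1 - r) * exp (- (- lam) * t)" by simp
    qed
  qed
qed

end
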